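(* For every $\beta\in\Psi^+$ and $i\in\{0,1\}$ there exist $a_1,a_2\in W({\rm G}_2)$, $j\in\{0,1\}$ and $t\in\mathbb{Z}$ such that $e_\beta e_i=\delta^ta_1e_ja_2$ in ${\rm Br}({\rm G}_2)$.
   Context: Let $\delta$ be an indeterminate. ${\rm Br}({\rm G}_2)$ is the $\mathbb{Z}[\delta^{\pm1}]$-algebra generated by $r_0,r_1,e_0,e_1$ subject to the following relations: - $r_0^2=r_1^2=1$; - $r_ie_i=e_ir_i=e_i$ for $i=0,1$; - $e_0^2=\delta^3e_0$ and $e_1^2=\delta e_1$; - $r_0e_1e_0=r_1e_0$ and $e_0e_1r_0=e_0r_1$; - $e_1r_0e_1r_0e_1=e_1$ and $e_1r_0e_1r_0r_1=e_1r_0r_1r_0$; - $e_0r_1e_0=\delta^2e_0$; - $r_1r_0e_1r_0e_1=r_0r_1r_0e_1$; - $(r_1r_0)^6=1$. Let $\Psi$ be a root system of type ${\rm G}_2$ with simple roots $\beta_0$ (short) and $\beta_1$ (long), and positive roots $\Psi^+=\{\beta_0,\beta_1,\beta_0+\beta_1,2\beta_0+\beta_1,3\beta_0+\beta_1,3\beta_0+2\beta_1\}$. $W({\rm G}_2)$ is generated by the reflections $s_0,s_1$ in $\beta_0,\beta_1$. The subgroup of units of ${\rm Br}({\rm G}_2)$ generated by $r_0,r_1$ is isomorphic to $W({\rm G}_2)$ via $r_i\mapsto s_i$, and elements of $W({\rm G}_2)$ are identified with their images. For $\beta\in\Psi^+$, choose $w\in W({\rm G}_2)$ and $k\in\{0,1\}$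 with $w\beta_k=\beta$, and set $e_\beta=we_kw^{-1}$. This is independent of the choice of $w$ and $k$. *)

theory Defs
  imports Main
begin

text \<open>Br(G2) is presented by generators and relations over Z[delta^{+-1}].
  An identity holds in the presented algebra iff it holds in every
  Z[delta^{+-1}]-algebra, i.e. every ring with identity 'a together with a
  central invertible element d (image of delta, with inverse di) and elements
  r0 r1 e0 e1 satisfying the defining relations.\<close>

definition zpow :: "'a::ring_1 \<Rightarrow> 'a \<Rightarrow> int \<Rightarrow> 'a" where
  "zpow d di t = (if 0 \<le> t then d ^ nat t else di ^ nat (- t))"

definition brg2_rel :: "'a::ring_1 \<Rightarrow> 'a \<Rightarrow> 'a \<Rightarrow> 'a \<Rightarrow> 'a \<Rightarrow> 'a \<Rightarrow> bool" where
  "brg2_rel d di r0 r1 e0 e1 \<longleftrightarrow>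
     d * di = 1 \<and> di * d = 1 \<and> (\<forall>x. d * x = x * d) \<and>
     r0 * r0 = 1 \<and> r1 * r1 = 1 \<and>
     r0 * e0 = e0 \<and> e0 * r0 = e0 \<and> r1 * e1 = e1 \<and> e1 * r1 = e1 \<and>
     e0 * e0 = d ^ 3 * e0 \<and> e1 * e1 = d * e1 \<and>
     r0 * e1 * e0 = r1 * e0 \<and> e0 * e1 * r0 = e0 * r1 \<and>
     e1 * r0 * e1 * r0 * e1 = e1 \<and> e1 * r0 * e1 * r0 * r1 = e1 * r0 * r1 * r0 \<and>
     e0 * r1 * e0 = d ^ 2 * e0 \<and>
     r1 * r0 * e1 * r0 * e1 = r0 * r1 * r0 * e1 \<and>
     (r1 * r0) ^ 6 = 1"

text \<open>Elements of W(G2) are given as words in the generators 0,1 (list entries);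
  a word [i1,...,in] stands for r_{i1} ... r_{in} (resp. s_{i1} ... s_{in}).\<close>

definition gen_r :: "'a::ring_1 \<Rightarrow> 'a \<Rightarrow> nat \<Rightarrow> 'a" where
  "gen_r r0 r1 i = (if i = 0 then r0 else r1)"

definition gen_e :: "'a::ring_1 \<Rightarrow> 'a \<Rightarrow> nat \<Rightarrow> 'a" where
  "gen_e e0 e1 i = (if i = 0 then e0 else e1)"

definition wprod :: "'a::ring_1 \<Rightarrow> 'a \<Rightarrow> nat list \<Rightarrow> 'a" where
  "wprod r0 r1 w = foldr (\<lambda>i acc. gen_r r0 r1 i * acc) w 1"

definition is_word :: "nat list \<Rightarrow> bool" where
  "is_word w \<longleftrightarrow> set w \<subseteq> {0, 1}"

text \<open>Roots of G2 as integer coefficient pairs (c0, c1) meaning c0*beta0 + c1*beta1,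
  beta0 short, beta1 long. Reflections: s0 x = x - <x,beta0^v> beta0,
  s1 x = x - <x,beta1^v> beta1, with <beta1,beta0^v> = -3, <beta0,beta1^v> = -1.\<close>

definition refl :: "nat \<Rightarrow> int \<times> int \<Rightarrow> int \<times> int" where
  "refl i v = (case v of (c0, c1) \<Rightarrow>
      if i = 0 then (3 * c1 - c0, c1) else (c0, c0 - c1))"

definition wact :: "nat list \<Rightarrow> int \<times> int \<Rightarrow> int \<times> int" where
  "wact w v = foldr refl w v"

definition simple_root :: "nat \<Rightarrow> int \<times> int" where
  "simple_root k = (if k = 0 then (1, 0) else (0, 1))"

definition pos_roots :: "(int \<times> int) set" where
  "pos_roots = {(1,0), (0,1), (1,1), (2,1), (3,1), (3,2)}"

text \<open>e_beta = w e_k w^{-1} for some chosen w, k with w beta_k = beta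
  (the inverse of the word w is its reverse, generators being involutions).\<close>

definition ebeta :: "'a::ring_1 \<Rightarrow> 'a \<Rightarrow> 'a \<Rightarrow> 'a \<Rightarrow> int \<times> int \<Rightarrow> 'a" where
  "ebeta r0 r1 e0 e1 \<beta> =
     (let (w, k) = (SOME (w, k). is_word w \<and> k < 2 \<and> wact w (simple_root k) = \<beta>)
      in wprod r0 r1 w * gen_e e0 e1 k * wprod r0 r1 (rev w))"

end

theory Submission
  imports Defs
begin

definition lt :: "'a::ring_1 \<Rightarrow> 'a \<Rightarrow> 'a \<Rightarrow> 'a \<Rightarrow> nat \<Rightarrow> 'a" where
  "lt r0 r1 e0 e1 c = (if c = 0 then r0 else if c = 1 then r1 else if c = 2 then e0 else e1)"

definition ev :: "'a::ring_1 \<Rightarrow> 'a \<Rightarrow> 'a \<Rightarrow> 'a \<Rightarrow> nat list \<Rightarrow> 'a" where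
  "ev r0 r1 e0 e1 xs = foldr (\<lambda>c acc. lt r0 r1 e0 e1 c * acc) xs 1"

lemma ev_Nil[simp]: "ev r0 r1 e0 e1 [] = 1"
  by (simp add: ev_def)

lemma ev_Cons: "ev r0 r1 e0 e1 (c # xs) = lt r0 r1 e0 e1 c * ev r0 r1 e0 e1 xs"
  by (simp add: ev_def)

lemma ev_append: "ev r0 r1 e0 e1 (xs @ ys) = ev r0 r1 e0 e1 xs * ev r0 r1 e0 e1 ys"
  by (induction xs) (simp_all add: ev_Cons mult.assoc)

locale brg =
  fixes d di r0 r1 e0 e1 :: "'a::ring_1"
  assumes R: "brg2_rel d di r0 r1 e0 e1"
begin

abbreviation "E \<equiv> ev r0 r1 e0 e1"

lemma dcomm: "d ^ t * x = x * d ^ t"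
proof (induction t)
  case 0 then show ?case by simp
next
  case (Suc t)
  have dc: "\<And>y. d * y = y * d" using R by (simp add: brg2_rel_def)
  have "d ^ Suc t * x = d * (d ^ t * x)" by (simp add: mult.assoc)
  also have "\<dots> = d * (x * d ^ t)" using Suc by simp
  also have "\<dots> = x * d * d ^ t" using dc by (simp add: mult.assoc[symmetric])
  also have "\<dots> = x * d ^ Suc t" by (simp add: mult.assoc power_commutes)
  finally show ?case .
qed

lemma stp:
  assumes "E X = d ^ a * E Y" "Y = p @ l @ s" "E l = d ^ t * E r" "Z = p @ r @ s" "n = a + t"
  shows "E X = d ^ n * E Z"
proof -
  have "E Y = E p * (d ^ t * E r) * E s" using assms(2,3) by (simp add: ev_append mult.assoc)
  also have "\<dots> = d ^ t * E Z" using assms(4)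
    by (simp add: ev_append mult.assoc dcomm)
  finally show ?thesis using assms(1,5) by (simp add: power_add mult.assoc)
qed

lemma r0r0: "r0 * r0 = 1" and r1r1: "r1 * r1 = 1" using R by (simp_all add: brg2_rel_def)

lemma r0r0x: "r0 * (r0 * x) = x" by (simp add: mult.assoc[symmetric] r0r0)
lemma r1r1x: "r1 * (r1 * x) = x" by (simp add: mult.assoc[symmetric] r1r1)

lemma braid: "r1 * (r0 * (r1 * (r0 * (r1 * r0)))) = r0 * (r1 * (r0 * (r1 * (r0 * r1))))"
proof -
  define x where "x = r1 * (r0 * (r1 * (r0 * (r1 * r0))))"
  define y where "y = r0 * (r1 * (r0 * (r1 * (r0 * r1))))"
  have "(r1 * r0) ^ 6 = 1" using R by (simp add: brg2_rel_def)
  then have xx: "x * x = 1" unfolding x_def by (simp add: numeral_eq_Suc mult.assoc)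
  have yx: "y * x = 1" unfolding x_def y_def by (simp add: mult.assoc r0r0x r1r1x r0r0)
  have "y = y * (x * x)" using xx by simp
  also have "\<dots> = x" using yx by (simp add: mult.assoc[symmetric])
  finally show ?thesis unfolding x_def y_def by simp
qed

lemmas rdefs = ev_Cons lt_def mult.assoc
lemma rl0f: "E [0,0] = d ^ 0 * E []" using R unfolding brg2_rel_def by (simp add: rdefs)
lemma rl0b: "E [] = d ^ 0 * E [0,0]" using rl0f by simp
lemma rl1f: "E [1,1] = d ^ 0 * E []" using R unfolding brg2_rel_def by (simp add: rdefs)
lemma rl1b: "E [] = d ^ 0 * E [1,1]" using rl1f by simp
lemma rl2f: "E [1,0,1,0,1,0] = d ^ 0 * E [0,1,0,1,0,1]" using braid by (simp add: rdefs)
lemma rl2b: "E [0,1,0,1,0,1] = d ^ 0 * E [1,0,1,0,1,0]" using rl2f by simp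
lemma rl3f: "E [0,2] = d ^ 0 * E [2]" using R unfolding brg2_rel_def by (simp add: rdefs)
lemma rl3b: "E [2] = d ^ 0 * E [0,2]" using rl3f by simp
lemma rl4f: "E [2,0] = d ^ 0 * E [2]" using R unfolding brg2_rel_def by (simp add: rdefs)
lemma rl4b: "E [2] = d ^ 0 * E [2,0]" using rl4f by simp
lemma rl5f: "E [1,3] = d ^ 0 * E [3]" using R unfolding brg2_rel_def by (simp add: rdefs)
lemma rl5b: "E [3] = d ^ 0 * E [1,3]" using rl5f by simp
lemma rl6f: "E [3,1] = d ^ 0 * E [3]" using R unfolding brg2_rel_def by (simp add: rdefs)
lemma rl6b: "E [3] = d ^ 0 * E [3,1]" using rl6f by simp
lemma rl7f: "E [2,2] = d ^ 3 * E [2]" using R unfolding brg2_rel_def by (simp add: rdefs)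
lemma rl8f: "E [3,3] = d ^ 1 * E [3]" using R unfolding brg2_rel_def by (simp add: rdefs)
lemma rl9f: "E [0,3,2] = d ^ 0 * E [1,2]" using R unfolding brg2_rel_def by (simp add: rdefs)
lemma rl9b: "E [1,2] = d ^ 0 * E [0,3,2]" using rl9f by simp
lemma rl10f: "E [2,3,0] = d ^ 0 * E [2,1]" using R unfolding brg2_rel_def by (simp add: rdefs)
lemma rl10b: "E [2,1] = d ^ 0 * E [2,3,0]" using rl10f by simp
lemma rl11f: "E [3,0,3,0,3] = d ^ 0 * E [3]" using R unfolding brg2_rel_def by (simp add: rdefs)
lemma rl11b: "E [3] = d ^ 0 * E [3,0,3,0,3]" using rl11f by simp
lemma rl12f: "E [3,0,3,0,1] = d ^ 0 * E [3,0,1,0]" using R unfolding brg2_rel_def by (simp add: rdefs)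
lemma rl12b: "E [3,0,1,0] = d ^ 0 * E [3,0,3,0,1]" using rl12f by simp
lemma rl13f: "E [2,1,2] = d ^ 2 * E [2]" using R unfolding brg2_rel_def by (simp add: rdefs)
lemma rl14f: "E [1,0,3,0,3] = d ^ 0 * E [0,1,0,3]" using R unfolding brg2_rel_def by (simp add: rdefs)
lemma rl14b: "E [0,1,0,3] = d ^ 0 * E [1,0,3,0,3]" using rl14f by simp

lemma cs_e_0_0: "E [2,2] = d ^ 3 * E [2]"
proof -
  have "E [2,2] = d ^ 0 * E [2,2]" by simp
  then have "E [2,2] = d ^ 3 * E [2]" by (rule stp[where p="[]" and s="[]", OF _ _ rl7f]) simp_all
  then show ?thesis .
qed

lemma cs_e_0_1: "E [2,3] = d ^ 0 * E [2,1,0]"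
proof -
  have "E [2,3] = d ^ 0 * E [2,3]" by simp
  then have "E [2,3] = d ^ 0 * E [2,3,0,0]" by (rule stp[where p="[2,3]" and s="[]", OF _ _ rl0b]) simp_all
  then have "E [2,3] = d ^ 0 * E [2,1,0]" by (rule stp[where p="[]" and s="[0]", OF _ _ rl10f]) simp_all
  then show ?thesis .
qed

lemma cs_e_1_0: "E [3,2] = d ^ 0 * E [0,1,2]"
proof -
  have "E [3,2] = d ^ 0 * E [3,2]" by simp
  then have "E [3,2] = d ^ 0 * E [0,0,3,2]" by (rule stp[where p="[]" and s="[3,2]", OF _ _ rl0b]) simp_all
  then have "E [3,2] = d ^ 0 * E [0,1,2]" by (rule stp[where p="[0]" and s="[]", OF _ _ rl9f]) simp_all
  then show ?thesis .
qed

lemma cs_e_1_1: "E [3,3] = d ^ 1 * E [3]"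
proof -
  have "E [3,3] = d ^ 0 * E [3,3]" by simp
  then have "E [3,3] = d ^ 1 * E [3]" by (rule stp[where p="[]" and s="[]", OF _ _ rl8f]) simp_all
  then show ?thesis .
qed

lemma cs_0_1_0: "E [0,3,0,2] = d ^ 0 * E [1,2]"
proof -
  have "E [0,3,0,2] = d ^ 0 * E [0,3,0,2]" by simp
  then have "E [0,3,0,2] = d ^ 0 * E [0,3,2]" by (rule stp[where p="[0,3]" and s="[]", OF _ _ rl3f]) simp_all
  then have "E [0,3,0,2] = d ^ 0 * E [1,2]" by (rule stp[where p="[]" and s="[]", OF _ _ rl9f]) simp_all
  then show ?thesis .
qed

lemma cs_0_1_1: "E [0,3,0,3] = d ^ 0 * E [0,3,0,1,0,1,0]"
proof -
  have "E [0,3,0,3] = d ^ 0 * E [0,3,0,3]" by simp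
  then have "E [0,3,0,3] = d ^ 0 * E [0,3,0,3,0,0]" by (rule stp[where p="[0,3,0,3]" and s="[]", OF _ _ rl0b]) simp_all
  then have "E [0,3,0,3] = d ^ 0 * E [0,3,0,3,0,1,1,0]" by (rule stp[where p="[0,3,0,3,0]" and s="[0]", OF _ _ rl1b]) simp_all
  then have "E [0,3,0,3] = d ^ 0 * E [0,3,0,1,0,1,0]" by (rule stp[where p="[0]" and s="[1,0]", OF _ _ rl12f]) simp_all
  then show ?thesis .
qed

lemma cs_1_0_0: "E [1,2,1,2] = d ^ 2 * E [1,2]"
proof -
  have "E [1,2,1,2] = d ^ 0 * E [1,2,1,2]" by simp
  then have "E [1,2,1,2] = d ^ 2 * E [1,2]" by (rule stp[where p="[1]" and s="[]", OF _ _ rl13f]) simp_all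
  then show ?thesis .
qed

lemma cs_1_0_1: "E [1,2,1,3] = d ^ 0 * E [1,2,1,0]"
proof -
  have "E [1,2,1,3] = d ^ 0 * E [1,2,1,3]" by simp
  then have "E [1,2,1,3] = d ^ 0 * E [1,2,3]" by (rule stp[where p="[1,2]" and s="[]", OF _ _ rl5f]) simp_all
  then have "E [1,2,1,3] = d ^ 0 * E [1,2,3,0,0]" by (rule stp[where p="[1,2,3]" and s="[]", OF _ _ rl0b]) simp_all
  then have "E [1,2,1,3] = d ^ 0 * E [1,2,1,0]" by (rule stp[where p="[1]" and s="[0]", OF _ _ rl10f]) simp_all
  then show ?thesis .
qed

lemma cs_01_0_0: "E [0,1,2,1,0,2] = d ^ 2 * E [0,1,2]"
proof -
  have "E [0,1,2,1,0,2] = d ^ 0 * E [0,1,2,1,0,2]" by simp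
  then have "E [0,1,2,1,0,2] = d ^ 0 * E [0,1,2,1,2]" by (rule stp[where p="[0,1,2,1]" and s="[]", OF _ _ rl3f]) simp_all
  then have "E [0,1,2,1,0,2] = d ^ 2 * E [0,1,2]" by (rule stp[where p="[0,1]" and s="[]", OF _ _ rl13f]) simp_all
  then show ?thesis .
qed

lemma cs_01_0_1: "E [0,1,2,1,0,3] = d ^ 1 * E [0,1,2,1,0]"
proof -
  have "E [0,1,2,1,0,3] = d ^ 0 * E [0,1,2,1,0,3]" by simp
  then have "E [0,1,2,1,0,3] = d ^ 0 * E [0,1,2,3,0,0,3]" by (rule stp[where p="[0,1]" and s="[0,3]", OF _ _ rl10b]) simp_all
  then have "E [0,1,2,1,0,3] = d ^ 0 * E [0,1,2,3,3]" by (rule stp[where p="[0,1,2,3]" and s="[3]", OF _ _ rl0f]) simp_all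
  then have "E [0,1,2,1,0,3] = d ^ 1 * E [0,1,2,3]" by (rule stp[where p="[0,1,2]" and s="[]", OF _ _ rl8f]) simp_all
  then have "E [0,1,2,1,0,3] = d ^ 1 * E [0,1,2,3,0,0]" by (rule stp[where p="[0,1,2,3]" and s="[]", OF _ _ rl0b]) simp_all
  then have "E [0,1,2,1,0,3] = d ^ 1 * E [0,1,2,1,0]" by (rule stp[where p="[0,1]" and s="[0]", OF _ _ rl10f]) simp_all
  then show ?thesis .
qed

lemma cs_10_1_0: "E [1,0,3,0,1,2] = d ^ 1 * E [2]"
proof -
  have "E [1,0,3,0,1,2] = d ^ 0 * E [1,0,3,0,1,2]" by simp
  then have "E [1,0,3,0,1,2] = d ^ 0 * E [1,0,3,0,0,3,2]" by (rule stp[where p="[1,0,3,0]" and s="[]", OF _ _ rl9b]) simp_all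
  then have "E [1,0,3,0,1,2] = d ^ 0 * E [1,0,3,3,2]" by (rule stp[where p="[1,0,3]" and s="[3,2]", OF _ _ rl0f]) simp_all
  then have "E [1,0,3,0,1,2] = d ^ 1 * E [1,0,3,2]" by (rule stp[where p="[1,0]" and s="[2]", OF _ _ rl8f]) simp_all
  then have "E [1,0,3,0,1,2] = d ^ 1 * E [1,1,2]" by (rule stp[where p="[1]" and s="[]", OF _ _ rl9f]) simp_all
  then have "E [1,0,3,0,1,2] = d ^ 1 * E [2]" by (rule stp[where p="[]" and s="[2]", OF _ _ rl1f]) simp_all
  then show ?thesis .
qed

lemma cs_10_1_1: "E [1,0,3,0,1,3] = d ^ 0 * E [1,0,3,0,1,0,1,0]"
proof -
  have "E [1,0,3,0,1,3] = d ^ 0 * E [1,0,3,0,1,3]" by simp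
  then have "E [1,0,3,0,1,3] = d ^ 0 * E [1,0,3,0,3]" by (rule stp[where p="[1,0,3,0]" and s="[]", OF _ _ rl5f]) simp_all
  then have "E [1,0,3,0,1,3] = d ^ 0 * E [1,0,3,0,3,0,0]" by (rule stp[where p="[1,0,3,0,3]" and s="[]", OF _ _ rl0b]) simp_all
  then have "E [1,0,3,0,1,3] = d ^ 0 * E [1,0,3,0,3,0,1,1,0]" by (rule stp[where p="[1,0,3,0,3,0]" and s="[0]", OF _ _ rl1b]) simp_all
  then have "E [1,0,3,0,1,3] = d ^ 0 * E [1,0,3,0,1,0,1,0]" by (rule stp[where p="[1,0]" and s="[1,0]", OF _ _ rl12f]) simp_all
  then show ?thesis .
qed

lemma cs_010_1_0: "E [0,1,0,3,0,1,0,2] = d ^ 1 * E [0,2]"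
proof -
  have "E [0,1,0,3,0,1,0,2] = d ^ 0 * E [0,1,0,3,0,1,0,2]" by simp
  then have "E [0,1,0,3,0,1,0,2] = d ^ 0 * E [0,1,0,3,0,1,2]" by (rule stp[where p="[0,1,0,3,0,1]" and s="[]", OF _ _ rl3f]) simp_all
  then have "E [0,1,0,3,0,1,0,2] = d ^ 0 * E [0,1,0,3,0,0,3,2]" by (rule stp[where p="[0,1,0,3,0]" and s="[]", OF _ _ rl9b]) simp_all
  then have "E [0,1,0,3,0,1,0,2] = d ^ 0 * E [0,1,0,3,3,2]" by (rule stp[where p="[0,1,0,3]" and s="[3,2]", OF _ _ rl0f]) simp_all
  then have "E [0,1,0,3,0,1,0,2] = d ^ 1 * E [0,1,0,3,2]" by (rule stp[where p="[0,1,0]" and s="[2]", OF _ _ rl8f]) simp_all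
  then have "E [0,1,0,3,0,1,0,2] = d ^ 1 * E [0,1,1,2]" by (rule stp[where p="[0,1]" and s="[]", OF _ _ rl9f]) simp_all
  then have "E [0,1,0,3,0,1,0,2] = d ^ 1 * E [0,2]" by (rule stp[where p="[0]" and s="[2]", OF _ _ rl1f]) simp_all
  then show ?thesis .
qed

lemma cs_010_1_1: "E [0,1,0,3,0,1,0,3] = d ^ 0 * E [0,1,0,3]"
proof -
  have "E [0,1,0,3,0,1,0,3] = d ^ 0 * E [0,1,0,3,0,1,0,3]" by simp
  then have "E [0,1,0,3,0,1,0,3] = d ^ 0 * E [0,1,0,3,0,1,0,1,1,3]" by (rule stp[where p="[0,1,0,3,0,1,0]" and s="[3]", OF _ _ rl1b]) simp_all
  then have "E [0,1,0,3,0,1,0,3] = d ^ 0 * E [0,1,0,3,0,1,0,1,3]" by (rule stp[where p="[0,1,0,3,0,1,0,1]" and s="[]", OF _ _ rl5f]) simp_all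
  then have "E [0,1,0,3,0,1,0,3] = d ^ 0 * E [0,1,0,3,0,3,0,1,1,3]" by (rule stp[where p="[0,1,0]" and s="[1,3]", OF _ _ rl12b]) simp_all
  then have "E [0,1,0,3,0,1,0,3] = d ^ 0 * E [0,1,0,3,0,3,0,3]" by (rule stp[where p="[0,1,0,3,0,3,0]" and s="[3]", OF _ _ rl1f]) simp_all
  then have "E [0,1,0,3,0,1,0,3] = d ^ 0 * E [0,1,0,3]" by (rule stp[where p="[0,1,0]" and s="[]", OF _ _ rl11f]) simp_all
  then show ?thesis .
qed

lemma cs_101_0_0: "E [1,0,1,2,1,0,1,2] = d ^ 2 * E [1,0,1,2]"
proof -
  have "E [1,0,1,2,1,0,1,2] = d ^ 0 * E [1,0,1,2,1,0,1,2]" by simp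
  then have "E [1,0,1,2,1,0,1,2] = d ^ 0 * E [1,0,1,2,1,0,1,0,0,2]" by (rule stp[where p="[1,0,1,2,1,0,1]" and s="[2]", OF _ _ rl0b]) simp_all
  then have "E [1,0,1,2,1,0,1,2] = d ^ 0 * E [1,0,1,2,1,0,1,0,2]" by (rule stp[where p="[1,0,1,2,1,0,1,0]" and s="[]", OF _ _ rl3f]) simp_all
  then have "E [1,0,1,2,1,0,1,2] = d ^ 0 * E [1,0,1,2,3,0,0,1,0,2]" by (rule stp[where p="[1,0,1]" and s="[0,1,0,2]", OF _ _ rl10b]) simp_all
  then have "E [1,0,1,2,1,0,1,2] = d ^ 0 * E [1,0,1,2,3,1,0,2]" by (rule stp[where p="[1,0,1,2,3]" and s="[1,0,2]", OF _ _ rl0f]) simp_all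
  then have "E [1,0,1,2,1,0,1,2] = d ^ 0 * E [1,0,1,2,3,0,2]" by (rule stp[where p="[1,0,1,2]" and s="[0,2]", OF _ _ rl6f]) simp_all
  then have "E [1,0,1,2,1,0,1,2] = d ^ 0 * E [1,0,1,2,1,2]" by (rule stp[where p="[1,0,1]" and s="[2]", OF _ _ rl10f]) simp_all
  then have "E [1,0,1,2,1,0,1,2] = d ^ 2 * E [1,0,1,2]" by (rule stp[where p="[1,0,1]" and s="[]", OF _ _ rl13f]) simp_all
  then show ?thesis .
qed

lemma cs_101_0_1: "E [1,0,1,2,1,0,1,3] = d ^ 1 * E [1,0,1,2,1,0]"
proof -
  have "E [1,0,1,2,1,0,1,3] = d ^ 0 * E [1,0,1,2,1,0,1,3]" by simp
  then have "E [1,0,1,2,1,0,1,3] = d ^ 0 * E [1,0,1,2,1,0,3]" by (rule stp[where p="[1,0,1,2,1,0]" and s="[]", OF _ _ rl5f]) simp_all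
  then have "E [1,0,1,2,1,0,1,3] = d ^ 0 * E [1,0,1,2,3,0,0,3]" by (rule stp[where p="[1,0,1]" and s="[0,3]", OF _ _ rl10b]) simp_all
  then have "E [1,0,1,2,1,0,1,3] = d ^ 0 * E [1,0,1,2,3,3]" by (rule stp[where p="[1,0,1,2,3]" and s="[3]", OF _ _ rl0f]) simp_all
  then have "E [1,0,1,2,1,0,1,3] = d ^ 1 * E [1,0,1,2,3]" by (rule stp[where p="[1,0,1,2]" and s="[]", OF _ _ rl8f]) simp_all
  then have "E [1,0,1,2,1,0,1,3] = d ^ 1 * E [1,0,1,2,3,0,0]" by (rule stp[where p="[1,0,1,2,3]" and s="[]", OF _ _ rl0b]) simp_all
  then have "E [1,0,1,2,1,0,1,3] = d ^ 1 * E [1,0,1,2,1,0]" by (rule stp[where p="[1,0,1]" and s="[0]", OF _ _ rl10f]) simp_all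
  then show ?thesis .
qed

lemma cs_0101_0_0: "E [0,1,0,1,2,1,0,1,0,2] = d ^ 2 * E [0,1,0,1,2]"
proof -
  have "E [0,1,0,1,2,1,0,1,0,2] = d ^ 0 * E [0,1,0,1,2,1,0,1,0,2]" by simp
  then have "E [0,1,0,1,2,1,0,1,0,2] = d ^ 0 * E [0,1,0,1,2,3,0,0,1,0,2]" by (rule stp[where p="[0,1,0,1]" and s="[0,1,0,2]", OF _ _ rl10b]) simp_all
  then have "E [0,1,0,1,2,1,0,1,0,2] = d ^ 0 * E [0,1,0,1,2,3,1,0,2]" by (rule stp[where p="[0,1,0,1,2,3]" and s="[1,0,2]", OF _ _ rl0f]) simp_all
  then have "E [0,1,0,1,2,1,0,1,0,2] = d ^ 0 * E [0,1,0,1,2,3,0,2]" by (rule stp[where p="[0,1,0,1,2]" and s="[0,2]", OF _ _ rl6f]) simp_all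
  then have "E [0,1,0,1,2,1,0,1,0,2] = d ^ 0 * E [0,1,0,1,2,1,2]" by (rule stp[where p="[0,1,0,1]" and s="[2]", OF _ _ rl10f]) simp_all
  then have "E [0,1,0,1,2,1,0,1,0,2] = d ^ 2 * E [0,1,0,1,2]" by (rule stp[where p="[0,1,0,1]" and s="[]", OF _ _ rl13f]) simp_all
  then show ?thesis .
qed

lemma cs_0101_0_1: "E [0,1,0,1,2,1,0,1,0,3] = d ^ 0 * E [0,1,0,1,2,0,1,0]"
proof -
  have "E [0,1,0,1,2,1,0,1,0,3] = d ^ 0 * E [0,1,0,1,2,1,0,1,0,3]" by simp
  then have "E [0,1,0,1,2,1,0,1,0,3] = d ^ 0 * E [0,1,0,1,2,0,0,1,0,1,0,3]" by (rule stp[where p="[0,1,0,1,2]" and s="[1,0,1,0,3]", OF _ _ rl0b]) simp_all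
  then have "E [0,1,0,1,2,1,0,1,0,3] = d ^ 0 * E [0,1,0,1,2,0,1,0,1,0,3]" by (rule stp[where p="[0,1,0,1]" and s="[0,1,0,1,0,3]", OF _ _ rl4f]) simp_all
  then have "E [0,1,0,1,2,1,0,1,0,3] = d ^ 0 * E [0,1,0,1,2,0,1,0,1,0,3,0,0]" by (rule stp[where p="[0,1,0,1,2,0,1,0,1,0,3]" and s="[]", OF _ _ rl0b]) simp_all
  then have "E [0,1,0,1,2,1,0,1,0,3] = d ^ 0 * E [0,1,0,1,2,0,1,0,1,0,3,0,1,1,0]" by (rule stp[where p="[0,1,0,1,2,0,1,0,1,0,3,0]" and s="[0]", OF _ _ rl1b]) simp_all
  then have "E [0,1,0,1,2,1,0,1,0,3] = d ^ 0 * E [0,1,0,1,2,0,1,0,1,0,3,0,1,0,0,1,0]" by (rule stp[where p="[0,1,0,1,2,0,1,0,1,0,3,0,1]" and s="[1,0]", OF _ _ rl0b]) simp_all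
  then have "E [0,1,0,1,2,1,0,1,0,3] = d ^ 0 * E [0,1,0,1,2,0,1,0,1,0,3,0,3,0,1,0,1,0]" by (rule stp[where p="[0,1,0,1,2,0,1,0,1,0]" and s="[0,1,0]", OF _ _ rl12b]) simp_all
  then have "E [0,1,0,1,2,1,0,1,0,3] = d ^ 0 * E [0,1,0,1,2,0,1,0,0,1,0,3,0,1,0,1,0]" by (rule stp[where p="[0,1,0,1,2,0,1,0]" and s="[0,1,0,1,0]", OF _ _ rl14f]) simp_all
  then have "E [0,1,0,1,2,1,0,1,0,3] = d ^ 0 * E [0,1,0,1,2,0,1,1,0,3,0,1,0,1,0]" by (rule stp[where p="[0,1,0,1,2,0,1]" and s="[1,0,3,0,1,0,1,0]", OF _ _ rl0f]) simp_all
  then have "E [0,1,0,1,2,1,0,1,0,3] = d ^ 0 * E [0,1,0,1,2,0,0,3,0,1,0,1,0]" by (rule stp[where p="[0,1,0,1,2,0]" and s="[0,3,0,1,0,1,0]", OF _ _ rl1f]) simp_all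
  then have "E [0,1,0,1,2,1,0,1,0,3] = d ^ 0 * E [0,1,0,1,2,3,0,1,0,1,0]" by (rule stp[where p="[0,1,0,1,2]" and s="[3,0,1,0,1,0]", OF _ _ rl0f]) simp_all
  then have "E [0,1,0,1,2,1,0,1,0,3] = d ^ 0 * E [0,1,0,1,2,1,1,0,1,0]" by (rule stp[where p="[0,1,0,1]" and s="[1,0,1,0]", OF _ _ rl10f]) simp_all
  then have "E [0,1,0,1,2,1,0,1,0,3] = d ^ 0 * E [0,1,0,1,2,0,1,0]" by (rule stp[where p="[0,1,0,1,2]" and s="[0,1,0]", OF _ _ rl1f]) simp_all
  then show ?thesis .
qed

lemma cs_1010_1_0: "E [1,0,1,0,3,0,1,0,1,2] = d ^ 0 * E [1,2]"
proof -
  have "E [1,0,1,0,3,0,1,0,1,2] = d ^ 0 * E [1,0,1,0,3,0,1,0,1,2]" by simp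
  then have "E [1,0,1,0,3,0,1,0,1,2] = d ^ 0 * E [1,0,1,0,3,0,1,0,1,0,0,2]" by (rule stp[where p="[1,0,1,0,3,0,1,0,1]" and s="[2]", OF _ _ rl0b]) simp_all
  then have "E [1,0,1,0,3,0,1,0,1,2] = d ^ 0 * E [1,0,1,0,3,0,1,0,1,0,2]" by (rule stp[where p="[1,0,1,0,3,0,1,0,1,0]" and s="[]", OF _ _ rl3f]) simp_all
  then have "E [1,0,1,0,3,0,1,0,1,2] = d ^ 0 * E [1,0,1,0,3,0,3,0,1,1,0,2]" by (rule stp[where p="[1,0,1,0]" and s="[1,0,2]", OF _ _ rl12b]) simp_all
  then have "E [1,0,1,0,3,0,1,0,1,2] = d ^ 0 * E [1,0,1,0,3,0,3,0,0,2]" by (rule stp[where p="[1,0,1,0,3,0,3,0]" and s="[0,2]", OF _ _ rl1f]) simp_all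
  then have "E [1,0,1,0,3,0,1,0,1,2] = d ^ 0 * E [1,0,1,0,3,0,3,2]" by (rule stp[where p="[1,0,1,0,3,0,3]" and s="[2]", OF _ _ rl0f]) simp_all
  then have "E [1,0,1,0,3,0,1,0,1,2] = d ^ 0 * E [1,0,0,1,0,3,2]" by (rule stp[where p="[1,0]" and s="[2]", OF _ _ rl14f]) simp_all
  then have "E [1,0,1,0,3,0,1,0,1,2] = d ^ 0 * E [1,1,0,3,2]" by (rule stp[where p="[1]" and s="[1,0,3,2]", OF _ _ rl0f]) simp_all
  then have "E [1,0,1,0,3,0,1,0,1,2] = d ^ 0 * E [0,3,2]" by (rule stp[where p="[]" and s="[0,3,2]", OF _ _ rl1f]) simp_all
  then have "E [1,0,1,0,3,0,1,0,1,2] = d ^ 0 * E [1,2]" by (rule stp[where p="[]" and s="[]", OF _ _ rl9f]) simp_all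
  then show ?thesis .
qed

lemma cs_1010_1_1: "E [1,0,1,0,3,0,1,0,1,3] = d ^ 0 * E [1,0,1,0,3]"
proof -
  have "E [1,0,1,0,3,0,1,0,1,3] = d ^ 0 * E [1,0,1,0,3,0,1,0,1,3]" by simp
  then have "E [1,0,1,0,3,0,1,0,1,3] = d ^ 0 * E [1,0,1,0,3,0,3,0,1,1,3]" by (rule stp[where p="[1,0,1,0]" and s="[1,3]", OF _ _ rl12b]) simp_all
  then have "E [1,0,1,0,3,0,1,0,1,3] = d ^ 0 * E [1,0,1,0,3,0,3,0,3]" by (rule stp[where p="[1,0,1,0,3,0,3,0]" and s="[3]", OF _ _ rl1f]) simp_all
  then have "E [1,0,1,0,3,0,1,0,1,3] = d ^ 0 * E [1,0,1,0,3]" by (rule stp[where p="[1,0,1,0]" and s="[]", OF _ _ rl11f]) simp_all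
  then show ?thesis .
qed

lemma cs_01010_1_0: "E [0,1,0,1,0,3,0,1,0,1,0,2] = d ^ 0 * E [0,1,2]"
proof -
  have "E [0,1,0,1,0,3,0,1,0,1,0,2] = d ^ 0 * E [0,1,0,1,0,3,0,1,0,1,0,2]" by simp
  then have "E [0,1,0,1,0,3,0,1,0,1,0,2] = d ^ 0 * E [0,1,0,1,0,3,0,3,0,1,1,0,2]" by (rule stp[where p="[0,1,0,1,0]" and s="[1,0,2]", OF _ _ rl12b]) simp_all
  then have "E [0,1,0,1,0,3,0,1,0,1,0,2] = d ^ 0 * E [0,1,0,1,0,3,0,3,0,0,2]" by (rule stp[where p="[0,1,0,1,0,3,0,3,0]" and s="[0,2]", OF _ _ rl1f]) simp_all
  then have "E [0,1,0,1,0,3,0,1,0,1,0,2] = d ^ 0 * E [0,1,0,1,0,3,0,3,2]" by (rule stp[where p="[0,1,0,1,0,3,0,3]" and s="[2]", OF _ _ rl0f]) simp_all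
  then have "E [0,1,0,1,0,3,0,1,0,1,0,2] = d ^ 0 * E [0,1,0,0,1,0,3,2]" by (rule stp[where p="[0,1,0]" and s="[2]", OF _ _ rl14f]) simp_all
  then have "E [0,1,0,1,0,3,0,1,0,1,0,2] = d ^ 0 * E [0,1,1,0,3,2]" by (rule stp[where p="[0,1]" and s="[1,0,3,2]", OF _ _ rl0f]) simp_all
  then have "E [0,1,0,1,0,3,0,1,0,1,0,2] = d ^ 0 * E [0,0,3,2]" by (rule stp[where p="[0]" and s="[0,3,2]", OF _ _ rl1f]) simp_all
  then have "E [0,1,0,1,0,3,0,1,0,1,0,2] = d ^ 0 * E [3,2]" by (rule stp[where p="[]" and s="[3,2]", OF _ _ rl0f]) simp_all
  then have "E [0,1,0,1,0,3,0,1,0,1,0,2] = d ^ 0 * E [0,0,3,2]" by (rule stp[where p="[]" and s="[3,2]", OF _ _ rl0b]) simp_all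
  then have "E [0,1,0,1,0,3,0,1,0,1,0,2] = d ^ 0 * E [0,1,2]" by (rule stp[where p="[0]" and s="[]", OF _ _ rl9f]) simp_all
  then show ?thesis .
qed

lemma cs_01010_1_1: "E [0,1,0,1,0,3,0,1,0,1,0,3] = d ^ 1 * E [0,1,0,1,0,3,0,1,0,1,0]"
proof -
  have "E [0,1,0,1,0,3,0,1,0,1,0,3] = d ^ 0 * E [0,1,0,1,0,3,0,1,0,1,0,3]" by simp
  then have "E [0,1,0,1,0,3,0,1,0,1,0,3] = d ^ 0 * E [0,1,0,1,0,3,0,3,0,1,1,0,3]" by (rule stp[where p="[0,1,0,1,0]" and s="[1,0,3]", OF _ _ rl12b]) simp_all
  then have "E [0,1,0,1,0,3,0,1,0,1,0,3] = d ^ 0 * E [0,1,0,1,0,3,0,3,0,0,3]" by (rule stp[where p="[0,1,0,1,0,3,0,3,0]" and s="[0,3]", OF _ _ rl1f]) simp_all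
  then have "E [0,1,0,1,0,3,0,1,0,1,0,3] = d ^ 0 * E [0,1,0,1,0,3,0,3,3]" by (rule stp[where p="[0,1,0,1,0,3,0,3]" and s="[3]", OF _ _ rl0f]) simp_all
  then have "E [0,1,0,1,0,3,0,1,0,1,0,3] = d ^ 1 * E [0,1,0,1,0,3,0,3]" by (rule stp[where p="[0,1,0,1,0,3,0]" and s="[]", OF _ _ rl8f]) simp_all
  then have "E [0,1,0,1,0,3,0,1,0,1,0,3] = d ^ 1 * E [0,1,0,1,0,3,0,3,0,0]" by (rule stp[where p="[0,1,0,1,0,3,0,3]" and s="[]", OF _ _ rl0b]) simp_all
  then have "E [0,1,0,1,0,3,0,1,0,1,0,3] = d ^ 1 * E [0,1,0,1,0,3,0,3,0,1,1,0]" by (rule stp[where p="[0,1,0,1,0,3,0,3,0]" and s="[0]", OF _ _ rl1b]) simp_all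
  then have "E [0,1,0,1,0,3,0,1,0,1,0,3] = d ^ 1 * E [0,1,0,1,0,3,0,1,0,1,0]" by (rule stp[where p="[0,1,0,1,0]" and s="[1,0]", OF _ _ rl12f]) simp_all
  then show ?thesis .
qed

lemma cs_10101_0_0: "E [1,0,1,0,1,2,1,0,1,0,1,2] = d ^ 3 * E [1,0,1,0,1,2]"
proof -
  have "E [1,0,1,0,1,2,1,0,1,0,1,2] = d ^ 0 * E [1,0,1,0,1,2,1,0,1,0,1,2]" by simp
  then have "E [1,0,1,0,1,2,1,0,1,0,1,2] = d ^ 0 * E [1,0,1,0,1,2,1,0,1,0,0,3,2]" by (rule stp[where p="[1,0,1,0,1,2,1,0,1,0]" and s="[]", OF _ _ rl9b]) simp_all
  then have "E [1,0,1,0,1,2,1,0,1,0,1,2] = d ^ 0 * E [1,0,1,0,1,2,1,0,1,3,2]" by (rule stp[where p="[1,0,1,0,1,2,1,0,1]" and s="[3,2]", OF _ _ rl0f]) simp_all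
  then have "E [1,0,1,0,1,2,1,0,1,0,1,2] = d ^ 0 * E [1,0,1,0,1,2,1,0,3,2]" by (rule stp[where p="[1,0,1,0,1,2,1,0]" and s="[2]", OF _ _ rl5f]) simp_all
  then have "E [1,0,1,0,1,2,1,0,1,0,1,2] = d ^ 0 * E [1,0,1,0,1,2,1,1,2]" by (rule stp[where p="[1,0,1,0,1,2,1]" and s="[]", OF _ _ rl9f]) simp_all
  then have "E [1,0,1,0,1,2,1,0,1,0,1,2] = d ^ 0 * E [1,0,1,0,1,2,2]" by (rule stp[where p="[1,0,1,0,1,2]" and s="[2]", OF _ _ rl1f]) simp_all
  then have "E [1,0,1,0,1,2,1,0,1,0,1,2] = d ^ 3 * E [1,0,1,0,1,2]" by (rule stp[where p="[1,0,1,0,1]" and s="[]", OF _ _ rl7f]) simp_all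
  then show ?thesis .
qed

lemma cs_10101_0_1: "E [1,0,1,0,1,2,1,0,1,0,1,3] = d ^ 0 * E [1,0,1,0,1,2,1,0]"
proof -
  have "E [1,0,1,0,1,2,1,0,1,0,1,3] = d ^ 0 * E [1,0,1,0,1,2,1,0,1,0,1,3]" by simp
  then have "E [1,0,1,0,1,2,1,0,1,0,1,3] = d ^ 0 * E [1,0,1,0,1,2,3,0,0,1,0,1,3]" by (rule stp[where p="[1,0,1,0,1]" and s="[0,1,0,1,3]", OF _ _ rl10b]) simp_all
  then have "E [1,0,1,0,1,2,1,0,1,0,1,3] = d ^ 0 * E [1,0,1,0,1,2,3,1,0,1,3]" by (rule stp[where p="[1,0,1,0,1,2,3]" and s="[1,0,1,3]", OF _ _ rl0f]) simp_all
  then have "E [1,0,1,0,1,2,1,0,1,0,1,3] = d ^ 0 * E [1,0,1,0,1,2,3,0,1,3]" by (rule stp[where p="[1,0,1,0,1,2]" and s="[0,1,3]", OF _ _ rl6f]) simp_all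
  then have "E [1,0,1,0,1,2,1,0,1,0,1,3] = d ^ 0 * E [1,0,1,0,1,2,1,1,3]" by (rule stp[where p="[1,0,1,0,1]" and s="[1,3]", OF _ _ rl10f]) simp_all
  then have "E [1,0,1,0,1,2,1,0,1,0,1,3] = d ^ 0 * E [1,0,1,0,1,2,3]" by (rule stp[where p="[1,0,1,0,1,2]" and s="[3]", OF _ _ rl1f]) simp_all
  then have "E [1,0,1,0,1,2,1,0,1,0,1,3] = d ^ 0 * E [1,0,1,0,1,2,3,0,0]" by (rule stp[where p="[1,0,1,0,1,2,3]" and s="[]", OF _ _ rl0b]) simp_all
  then have "E [1,0,1,0,1,2,1,0,1,0,1,3] = d ^ 0 * E [1,0,1,0,1,2,1,0]" by (rule stp[where p="[1,0,1,0,1]" and s="[0]", OF _ _ rl10f]) simp_all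
  then show ?thesis .
qed

lemma mt_0_e: "E [0] = d ^ 0 * E [0]"
proof -
  have "E [0] = d ^ 0 * E [0]" by simp
  then show ?thesis .
qed

lemma mt_0_0: "E [0,0] = d ^ 0 * E []"
proof -
  have "E [0,0] = d ^ 0 * E [0,0]" by simp
  then have "E [0,0] = d ^ 0 * E []" by (rule stp[where p="[]" and s="[]", OF _ _ rl0f]) simp_all
  then show ?thesis .
qed

lemma mt_0_1: "E [0,1] = d ^ 0 * E [0,1]"
proof -
  have "E [0,1] = d ^ 0 * E [0,1]" by simp
  then show ?thesis .
qed

lemma mt_0_01: "E [0,0,1] = d ^ 0 * E [1]"
proof -
  have "E [0,0,1] = d ^ 0 * E [0,0,1]" by simp
  then have "E [0,0,1] = d ^ 0 * E [1]" by (rule stp[where p="[]" and s="[1]", OF _ _ rl0f]) simp_all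
  then show ?thesis .
qed

lemma mt_0_10: "E [0,1,0] = d ^ 0 * E [0,1,0]"
proof -
  have "E [0,1,0] = d ^ 0 * E [0,1,0]" by simp
  then show ?thesis .
qed

lemma mt_0_010: "E [0,0,1,0] = d ^ 0 * E [1,0]"
proof -
  have "E [0,0,1,0] = d ^ 0 * E [0,0,1,0]" by simp
  then have "E [0,0,1,0] = d ^ 0 * E [1,0]" by (rule stp[where p="[]" and s="[1,0]", OF _ _ rl0f]) simp_all
  then show ?thesis .
qed

lemma mt_0_101: "E [0,1,0,1] = d ^ 0 * E [0,1,0,1]"
proof -
  have "E [0,1,0,1] = d ^ 0 * E [0,1,0,1]" by simp
  then show ?thesis .
qed

lemma mt_0_0101: "E [0,0,1,0,1] = d ^ 0 * E [1,0,1]"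
proof -
  have "E [0,0,1,0,1] = d ^ 0 * E [0,0,1,0,1]" by simp
  then have "E [0,0,1,0,1] = d ^ 0 * E [1,0,1]" by (rule stp[where p="[]" and s="[1,0,1]", OF _ _ rl0f]) simp_all
  then show ?thesis .
qed

lemma mt_0_1010: "E [0,1,0,1,0] = d ^ 0 * E [0,1,0,1,0]"
proof -
  have "E [0,1,0,1,0] = d ^ 0 * E [0,1,0,1,0]" by simp
  then show ?thesis .
qed

lemma mt_0_01010: "E [0,0,1,0,1,0] = d ^ 0 * E [1,0,1,0]"
proof -
  have "E [0,0,1,0,1,0] = d ^ 0 * E [0,0,1,0,1,0]" by simp
  then have "E [0,0,1,0,1,0] = d ^ 0 * E [1,0,1,0]" by (rule stp[where p="[]" and s="[1,0,1,0]", OF _ _ rl0f]) simp_all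
  then show ?thesis .
qed

lemma mt_0_10101: "E [0,1,0,1,0,1] = d ^ 0 * E [0,1,0,1,0,1]"
proof -
  have "E [0,1,0,1,0,1] = d ^ 0 * E [0,1,0,1,0,1]" by simp
  then show ?thesis .
qed

lemma mt_0_010101: "E [0,0,1,0,1,0,1] = d ^ 0 * E [1,0,1,0,1]"
proof -
  have "E [0,0,1,0,1,0,1] = d ^ 0 * E [0,0,1,0,1,0,1]" by simp
  then have "E [0,0,1,0,1,0,1] = d ^ 0 * E [1,0,1,0,1]" by (rule stp[where p="[]" and s="[1,0,1,0,1]", OF _ _ rl0f]) simp_all
  then show ?thesis .
qed

lemma mt_1_e: "E [1] = d ^ 0 * E [1]"
proof -
  have "E [1] = d ^ 0 * E [1]" by simp
  then show ?thesis .
qed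

lemma mt_1_0: "E [1,0] = d ^ 0 * E [1,0]"
proof -
  have "E [1,0] = d ^ 0 * E [1,0]" by simp
  then show ?thesis .
qed

lemma mt_1_1: "E [1,1] = d ^ 0 * E []"
proof -
  have "E [1,1] = d ^ 0 * E [1,1]" by simp
  then have "E [1,1] = d ^ 0 * E []" by (rule stp[where p="[]" and s="[]", OF _ _ rl1f]) simp_all
  then show ?thesis .
qed

lemma mt_1_01: "E [1,0,1] = d ^ 0 * E [1,0,1]"
proof -
  have "E [1,0,1] = d ^ 0 * E [1,0,1]" by simp
  then show ?thesis .
qed

lemma mt_1_10: "E [1,1,0] = d ^ 0 * E [0]"
proof -
  have "E [1,1,0] = d ^ 0 * E [1,1,0]" by simp
  then have "E [1,1,0] = d ^ 0 * E [0]" by (rule stp[where p="[]" and s="[0]", OF _ _ rl1f]) simp_all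
  then show ?thesis .
qed

lemma mt_1_010: "E [1,0,1,0] = d ^ 0 * E [1,0,1,0]"
proof -
  have "E [1,0,1,0] = d ^ 0 * E [1,0,1,0]" by simp
  then show ?thesis .
qed

lemma mt_1_101: "E [1,1,0,1] = d ^ 0 * E [0,1]"
proof -
  have "E [1,1,0,1] = d ^ 0 * E [1,1,0,1]" by simp
  then have "E [1,1,0,1] = d ^ 0 * E [0,1]" by (rule stp[where p="[]" and s="[0,1]", OF _ _ rl1f]) simp_all
  then show ?thesis .
qed

lemma mt_1_0101: "E [1,0,1,0,1] = d ^ 0 * E [1,0,1,0,1]"
proof -
  have "E [1,0,1,0,1] = d ^ 0 * E [1,0,1,0,1]" by simp
  then show ?thesis .
qed

lemma mt_1_1010: "E [1,1,0,1,0] = d ^ 0 * E [0,1,0]"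
proof -
  have "E [1,1,0,1,0] = d ^ 0 * E [1,1,0,1,0]" by simp
  then have "E [1,1,0,1,0] = d ^ 0 * E [0,1,0]" by (rule stp[where p="[]" and s="[0,1,0]", OF _ _ rl1f]) simp_all
  then show ?thesis .
qed

lemma mt_1_01010: "E [1,0,1,0,1,0] = d ^ 0 * E [0,1,0,1,0,1]"
proof -
  have "E [1,0,1,0,1,0] = d ^ 0 * E [1,0,1,0,1,0]" by simp
  then have "E [1,0,1,0,1,0] = d ^ 0 * E [0,1,0,1,0,1]" by (rule stp[where p="[]" and s="[]", OF _ _ rl2f]) simp_all
  then show ?thesis .
qed

lemma mt_1_10101: "E [1,1,0,1,0,1] = d ^ 0 * E [0,1,0,1]"
proof -
  have "E [1,1,0,1,0,1] = d ^ 0 * E [1,1,0,1,0,1]" by simp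
  then have "E [1,1,0,1,0,1] = d ^ 0 * E [0,1,0,1]" by (rule stp[where p="[]" and s="[0,1,0,1]", OF _ _ rl1f]) simp_all
  then show ?thesis .
qed

lemma mt_1_010101: "E [1,0,1,0,1,0,1] = d ^ 0 * E [0,1,0,1,0]"
proof -
  have "E [1,0,1,0,1,0,1] = d ^ 0 * E [1,0,1,0,1,0,1]" by simp
  then have "E [1,0,1,0,1,0,1] = d ^ 0 * E [0,1,0,1,0,1,1]" by (rule stp[where p="[]" and s="[1]", OF _ _ rl2f]) simp_all
  then have "E [1,0,1,0,1,0,1] = d ^ 0 * E [0,1,0,1,0]" by (rule stp[where p="[0,1,0,1,0]" and s="[]", OF _ _ rl1f]) simp_all
  then show ?thesis .
qed
end

definition NFL :: "nat list list" where "NFL = [[], [0], [1], [0,1], [1,0], [0,1,0], [1,0,1], [0,1,0,1], [1,0,1,0], [0,1,0,1,0], [1,0,1,0,1], [0,1,0,1,0,1]]"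

definition mulg :: "nat \<Rightarrow> nat list \<Rightarrow> nat list" where
  "mulg i u = (if i = 0 then (if u = [] then [0] else (if u = [0] then [] else (if u = [1] then [0,1] else (if u = [0,1] then [1] else (if u = [1,0] then [0,1,0] else (if u = [0,1,0] then [1,0] else (if u = [1,0,1] then [0,1,0,1] else (if u = [0,1,0,1] then [1,0,1] else (if u = [1,0,1,0] then [0,1,0,1,0] else (if u = [0,1,0,1,0] then [1,0,1,0] else (if u = [1,0,1,0,1] then [0,1,0,1,0,1] else (if u = [0,1,0,1,0,1] then [1,0,1,0,1] else [])))))))))))) else (if u = [] then [1] else (if u = [0] then [1,0] else (if u = [1] then [] else (if u = [0,1] then [1,0,1] else (if u = [1,0] then [0] else (if u = [0,1,0] then [1,0,1,0] else (if u = [1,0,1] then [0,1] else (if u = [0,1,0,1] then [1,0,1,0,1] else (if u = [1,0,1,0] then [0,1,0] else (if u = [0,1,0,1,0] then [0,1,0,1,0,1] else (if u = [1,0,1,0,1] then [0,1,0,1] else (if u = [0,1,0,1,0,1] then [0,1,0,1,0] else [])))))))))))))"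

definition Q :: "'a::ring_1 itself \<Rightarrow> nat list \<Rightarrow> nat \<Rightarrow> nat \<Rightarrow> bool" where
  "Q _ u k i \<longleftrightarrow> (\<exists>a1 a2 j (t::nat). is_word a1 \<and> is_word a2 \<and> j < 2 \<and> (\<forall>(d::'a) di r0 r1 e0 e1. brg2_rel d di r0 r1 e0 e1 \<longrightarrow> ev r0 r1 e0 e1 (u @ [k+2] @ rev u @ [i+2]) = d ^ t * ev r0 r1 e0 e1 (a1 @ [j+2] @ a2)))"

lemma Q_cs_e_0_0: "Q TYPE('a::ring_1) [] 0 0"
  unfolding Q_def
  apply (rule exI[of _ "[]"], rule exI[of _ "[]"], rule exI[of _ 0], rule exI[of _ 3])
  apply (simp add: is_word_def)
  apply (intro allI impI)
  apply (drule brg.cs_e_0_0[OF brg.intro])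
  apply (simp add: numeral_eq_Suc)
  done

lemma Q_cs_e_0_1: "Q TYPE('a::ring_1) [] 0 1"
  unfolding Q_def
  apply (rule exI[of _ "[]"], rule exI[of _ "[1,0]"], rule exI[of _ 0], rule exI[of _ 0])
  apply (simp add: is_word_def)
  apply (intro allI impI)
  apply (drule brg.cs_e_0_1[OF brg.intro])
  apply (simp add: numeral_eq_Suc)
  done

lemma Q_cs_e_1_0: "Q TYPE('a::ring_1) [] 1 0"
  unfolding Q_def
  apply (rule exI[of _ "[0,1]"], rule exI[of _ "[]"], rule exI[of _ 0], rule exI[of _ 0])
  apply (simp add: is_word_def)
  apply (intro allI impI)
  apply (drule brg.cs_e_1_0[OF brg.intro])
  apply (simp add: numeral_eq_Suc)
  done

lemma Q_cs_e_1_1: "Q TYPE('a::ring_1) [] 1 1"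
  unfolding Q_def
  apply (rule exI[of _ "[]"], rule exI[of _ "[]"], rule exI[of _ 1], rule exI[of _ 1])
  apply (simp add: is_word_def)
  apply (intro allI impI)
  apply (drule brg.cs_e_1_1[OF brg.intro])
  apply (simp add: numeral_eq_Suc)
  done

lemma Q_cs_0_1_0: "Q TYPE('a::ring_1) [0] 1 0"
  unfolding Q_def
  apply (rule exI[of _ "[1]"], rule exI[of _ "[]"], rule exI[of _ 0], rule exI[of _ 0])
  apply (simp add: is_word_def)
  apply (intro allI impI)
  apply (drule brg.cs_0_1_0[OF brg.intro])
  apply (simp add: numeral_eq_Suc)
  done

lemma Q_cs_0_1_1: "Q TYPE('a::ring_1) [0] 1 1"
  unfolding Q_def
  apply (rule exI[of _ "[0]"], rule exI[of _ "[0,1,0,1,0]"], rule exI[of _ 1], rule exI[of _ 0])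
  apply (simp add: is_word_def)
  apply (intro allI impI)
  apply (drule brg.cs_0_1_1[OF brg.intro])
  apply (simp add: numeral_eq_Suc)
  done

lemma Q_cs_1_0_0: "Q TYPE('a::ring_1) [1] 0 0"
  unfolding Q_def
  apply (rule exI[of _ "[1]"], rule exI[of _ "[]"], rule exI[of _ 0], rule exI[of _ 2])
  apply (simp add: is_word_def)
  apply (intro allI impI)
  apply (drule brg.cs_1_0_0[OF brg.intro])
  apply (simp add: numeral_eq_Suc)
  done

lemma Q_cs_1_0_1: "Q TYPE('a::ring_1) [1] 0 1"
  unfolding Q_def
  apply (rule exI[of _ "[1]"], rule exI[of _ "[1,0]"], rule exI[of _ 0], rule exI[of _ 0])
  apply (simp add: is_word_def)
  apply (intro allI impI)
  apply (drule brg.cs_1_0_1[OF brg.intro])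
  apply (simp add: numeral_eq_Suc)
  done

lemma Q_cs_01_0_0: "Q TYPE('a::ring_1) [0,1] 0 0"
  unfolding Q_def
  apply (rule exI[of _ "[0,1]"], rule exI[of _ "[]"], rule exI[of _ 0], rule exI[of _ 2])
  apply (simp add: is_word_def)
  apply (intro allI impI)
  apply (drule brg.cs_01_0_0[OF brg.intro])
  apply (simp add: numeral_eq_Suc)
  done

lemma Q_cs_01_0_1: "Q TYPE('a::ring_1) [0,1] 0 1"
  unfolding Q_def
  apply (rule exI[of _ "[0,1]"], rule exI[of _ "[1,0]"], rule exI[of _ 0], rule exI[of _ 1])
  apply (simp add: is_word_def)
  apply (intro allI impI)
  apply (drule brg.cs_01_0_1[OF brg.intro])
  apply (simp add: numeral_eq_Suc)
  done

lemma Q_cs_10_1_0: "Q TYPE('a::ring_1) [1,0] 1 0"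
  unfolding Q_def
  apply (rule exI[of _ "[]"], rule exI[of _ "[]"], rule exI[of _ 0], rule exI[of _ 1])
  apply (simp add: is_word_def)
  apply (intro allI impI)
  apply (drule brg.cs_10_1_0[OF brg.intro])
  apply (simp add: numeral_eq_Suc)
  done

lemma Q_cs_10_1_1: "Q TYPE('a::ring_1) [1,0] 1 1"
  unfolding Q_def
  apply (rule exI[of _ "[1,0]"], rule exI[of _ "[0,1,0,1,0]"], rule exI[of _ 1], rule exI[of _ 0])
  apply (simp add: is_word_def)
  apply (intro allI impI)
  apply (drule brg.cs_10_1_1[OF brg.intro])
  apply (simp add: numeral_eq_Suc)
  done

lemma Q_cs_010_1_0: "Q TYPE('a::ring_1) [0,1,0] 1 0"
  unfolding Q_def
  apply (rule exI[of _ "[0]"], rule exI[of _ "[]"], rule exI[of _ 0], rule exI[of _ 1])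
  apply (simp add: is_word_def)
  apply (intro allI impI)
  apply (drule brg.cs_010_1_0[OF brg.intro])
  apply (simp add: numeral_eq_Suc)
  done

lemma Q_cs_010_1_1: "Q TYPE('a::ring_1) [0,1,0] 1 1"
  unfolding Q_def
  apply (rule exI[of _ "[0,1,0]"], rule exI[of _ "[]"], rule exI[of _ 1], rule exI[of _ 0])
  apply (simp add: is_word_def)
  apply (intro allI impI)
  apply (drule brg.cs_010_1_1[OF brg.intro])
  apply (simp add: numeral_eq_Suc)
  done

lemma Q_cs_101_0_0: "Q TYPE('a::ring_1) [1,0,1] 0 0"
  unfolding Q_def
  apply (rule exI[of _ "[1,0,1]"], rule exI[of _ "[]"], rule exI[of _ 0], rule exI[of _ 2])
  apply (simp add: is_word_def)
  apply (intro allI impI)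
  apply (drule brg.cs_101_0_0[OF brg.intro])
  apply (simp add: numeral_eq_Suc)
  done

lemma Q_cs_101_0_1: "Q TYPE('a::ring_1) [1,0,1] 0 1"
  unfolding Q_def
  apply (rule exI[of _ "[1,0,1]"], rule exI[of _ "[1,0]"], rule exI[of _ 0], rule exI[of _ 1])
  apply (simp add: is_word_def)
  apply (intro allI impI)
  apply (drule brg.cs_101_0_1[OF brg.intro])
  apply (simp add: numeral_eq_Suc)
  done

lemma Q_cs_0101_0_0: "Q TYPE('a::ring_1) [0,1,0,1] 0 0"
  unfolding Q_def
  apply (rule exI[of _ "[0,1,0,1]"], rule exI[of _ "[]"], rule exI[of _ 0], rule exI[of _ 2])
  apply (simp add: is_word_def)
  apply (intro allI impI)
  apply (drule brg.cs_0101_0_0[OF brg.intro])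
  apply (simp add: numeral_eq_Suc)
  done

lemma Q_cs_0101_0_1: "Q TYPE('a::ring_1) [0,1,0,1] 0 1"
  unfolding Q_def
  apply (rule exI[of _ "[0,1,0,1]"], rule exI[of _ "[0,1,0]"], rule exI[of _ 0], rule exI[of _ 0])
  apply (simp add: is_word_def)
  apply (intro allI impI)
  apply (drule brg.cs_0101_0_1[OF brg.intro])
  apply (simp add: numeral_eq_Suc)
  done

lemma Q_cs_1010_1_0: "Q TYPE('a::ring_1) [1,0,1,0] 1 0"
  unfolding Q_def
  apply (rule exI[of _ "[1]"], rule exI[of _ "[]"], rule exI[of _ 0], rule exI[of _ 0])
  apply (simp add: is_word_def)
  apply (intro allI impI)
  apply (drule brg.cs_1010_1_0[OF brg.intro])
  apply (simp add: numeral_eq_Suc)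
  done

lemma Q_cs_1010_1_1: "Q TYPE('a::ring_1) [1,0,1,0] 1 1"
  unfolding Q_def
  apply (rule exI[of _ "[1,0,1,0]"], rule exI[of _ "[]"], rule exI[of _ 1], rule exI[of _ 0])
  apply (simp add: is_word_def)
  apply (intro allI impI)
  apply (drule brg.cs_1010_1_1[OF brg.intro])
  apply (simp add: numeral_eq_Suc)
  done

lemma Q_cs_01010_1_0: "Q TYPE('a::ring_1) [0,1,0,1,0] 1 0"
  unfolding Q_def
  apply (rule exI[of _ "[0,1]"], rule exI[of _ "[]"], rule exI[of _ 0], rule exI[of _ 0])
  apply (simp add: is_word_def)
  apply (intro allI impI)
  apply (drule brg.cs_01010_1_0[OF brg.intro])
  apply (simp add: numeral_eq_Suc)
  done

lemma Q_cs_01010_1_1: "Q TYPE('a::ring_1) [0,1,0,1,0] 1 1"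
  unfolding Q_def
  apply (rule exI[of _ "[0,1,0,1,0]"], rule exI[of _ "[0,1,0,1,0]"], rule exI[of _ 1], rule exI[of _ 1])
  apply (simp add: is_word_def)
  apply (intro allI impI)
  apply (drule brg.cs_01010_1_1[OF brg.intro])
  apply (simp add: numeral_eq_Suc)
  done

lemma Q_cs_10101_0_0: "Q TYPE('a::ring_1) [1,0,1,0,1] 0 0"
  unfolding Q_def
  apply (rule exI[of _ "[1,0,1,0,1]"], rule exI[of _ "[]"], rule exI[of _ 0], rule exI[of _ 3])
  apply (simp add: is_word_def)
  apply (intro allI impI)
  apply (drule brg.cs_10101_0_0[OF brg.intro])
  apply (simp add: numeral_eq_Suc)
  done

lemma Q_cs_10101_0_1: "Q TYPE('a::ring_1) [1,0,1,0,1] 0 1"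
  unfolding Q_def
  apply (rule exI[of _ "[1,0,1,0,1]"], rule exI[of _ "[1,0]"], rule exI[of _ 0], rule exI[of _ 0])
  apply (simp add: is_word_def)
  apply (intro allI impI)
  apply (drule brg.cs_10101_0_1[OF brg.intro])
  apply (simp add: numeral_eq_Suc)
  done

lemmas Q_cases = Q_cs_e_0_0 Q_cs_e_0_1 Q_cs_e_1_0 Q_cs_e_1_1 Q_cs_0_1_0 Q_cs_0_1_1 Q_cs_1_0_0 Q_cs_1_0_1 Q_cs_01_0_0 Q_cs_01_0_1 Q_cs_10_1_0 Q_cs_10_1_1 Q_cs_010_1_0 Q_cs_010_1_1 Q_cs_101_0_0 Q_cs_101_0_1 Q_cs_0101_0_0 Q_cs_0101_0_1 Q_cs_1010_1_0 Q_cs_1010_1_1 Q_cs_01010_1_0 Q_cs_01010_1_1 Q_cs_10101_0_0 Q_cs_10101_0_1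

lemmas mt_all = brg.mt_0_e brg.mt_0_0 brg.mt_0_1 brg.mt_0_01 brg.mt_0_10 brg.mt_0_010 brg.mt_0_101 brg.mt_0_0101 brg.mt_0_1010 brg.mt_0_01010 brg.mt_0_10101 brg.mt_0_010101 brg.mt_1_e brg.mt_1_0 brg.mt_1_1 brg.mt_1_01 brg.mt_1_10 brg.mt_1_010 brg.mt_1_101 brg.mt_1_0101 brg.mt_1_1010 brg.mt_1_01010 brg.mt_1_10101 brg.mt_1_010101

fun nfw :: "nat list \<Rightarrow> nat list" where
  "nfw [] = []"
| "nfw (i # w) = mulg i (nfw w)"

lemma mulg_NF: "u \<in> set NFL \<Longrightarrow> mulg i u \<in> set NFL"
  by (auto simp: NFL_def mulg_def)

lemma nfw_NF: "nfw w \<in> set NFL"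
  by (induction w) (auto simp: mulg_NF, simp add: NFL_def)

lemma NF_word: "u \<in> set NFL \<Longrightarrow> is_word u"
  by (auto simp: NFL_def is_word_def)

lemma wact_Cons: "wact (i # w) v = refl i (wact w v)"
  by (simp add: wact_def)

lemma wact_mulg: "i < 2 \<Longrightarrow> u \<in> set NFL \<Longrightarrow> wact (i # u) v = wact (mulg i u) v"
  by (cases v) (auto simp: NFL_def mulg_def wact_def refl_def less_2_cases_iff)

lemma wact_nfw: "is_word w \<Longrightarrow> wact w v = wact (nfw w) v"
proof (induction w)
  case Nil then show ?case by simp
next
  case (Cons i w)
  then have iw: "is_word w" "i < 2" by (auto simp: is_word_def)
  have "wact (i # w) v = refl i (wact (nfw w) v)" using Cons iw by (simp add: wact_Cons)
  also have "\<dots> = wact (i # nfw w) v" by (simp add: wact_Cons)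
  also have "\<dots> = wact (nfw (i # w)) v" using wact_mulg[OF iw(2) nfw_NF] by simp
  finally show ?case .
qed

context brg
begin

lemma E_mulg: "i < 2 \<Longrightarrow> u \<in> set NFL \<Longrightarrow> E (i # u) = E (mulg i u)"
  using mt_all[OF brg_axioms]
  by (auto simp: NFL_def mulg_def less_2_cases_iff)

lemma E_nfw: "is_word w \<Longrightarrow> E w = E (nfw w)"
proof (induction w)
  case Nil then show ?case by simp
next
  case (Cons i w)
  then have iw: "is_word w" "i < 2" by (auto simp: is_word_def)
  have "E (i # w) = lt r0 r1 e0 e1 i * E (nfw w)" using Cons iw by (simp add: ev_Cons)
  also have "\<dots> = E (i # nfw w)" by (simp add: ev_Cons)
  also have "\<dots> = E (nfw (i # w))" using E_mulg[OF iw(2) nfw_NF] by simp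
  finally show ?case .
qed

lemma E_inv: "is_word w \<Longrightarrow> E w * E (rev w) = 1 \<and> E (rev w) * E w = 1"
proof (induction w)
  case Nil then show ?case by simp
next
  case (Cons i w)
  then have iw: "is_word w" "i < 2" and IH: "E w * E (rev w) = 1" "E (rev w) * E w = 1"
    by (auto simp: is_word_def)
  have ii: "lt r0 r1 e0 e1 i * lt r0 r1 e0 e1 i = 1" using iw(2) r0r0 r1r1
    by (auto simp: lt_def less_2_cases_iff)
  have "E (i # w) * E (rev (i # w)) = lt r0 r1 e0 e1 i * (E w * E (rev w)) * lt r0 r1 e0 e1 i"
    by (simp add: ev_Cons ev_append mult.assoc)
  also have "\<dots> = 1" using IH ii by simp
  finally have A: "E (i # w) * E (rev (i # w)) = 1" .
  have "E (rev (i # w)) * E (i # w) = E (rev w) * (lt r0 r1 e0 e1 i * lt r0 r1 e0 e1 i) * E w"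
    by (simp add: ev_Cons ev_append mult.assoc)
  also have "\<dots> = 1" using IH ii by simp
  finally show ?case using A by simp
qed

lemma E_rev_nfw: "is_word w \<Longrightarrow> E (rev w) = E (rev (nfw w))"
proof -
  assume w: "is_word w"
  have u: "is_word (nfw w)" by (rule NF_word[OF nfw_NF])
  have "E (rev w) = E (rev w) * (E (nfw w) * E (rev (nfw w)))" using E_inv[OF u] by simp
  also have "\<dots> = (E (rev w) * E w) * E (rev (nfw w))" using E_nfw[OF w] by (simp add: mult.assoc)
  also have "\<dots> = E (rev (nfw w))" using E_inv[OF w] by simp
  finally show ?thesis .
qed

lemma wprod_E: "is_word w \<Longrightarrow> wprod r0 r1 w = E w"
  by (induction w) (auto simp: wprod_def ev_Cons gen_r_def lt_def is_word_def)

lemma gen_e_E: "k < 2 \<Longrightarrow> gen_e e0 e1 k = E [k + 2]"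
  by (auto simp: gen_e_def ev_Cons lt_def less_2_cases_iff)

end

lemma Q_all:
  assumes "u \<in> set NFL" "k < 2" "i < 2" "wact u (simple_root k) \<in> pos_roots"
  shows "Q TYPE('a::ring_1) u k i"
  using assms Q_cases
  by (auto simp: NFL_def less_2_cases_iff wact_def refl_def simple_root_def pos_roots_def)

theorem lemma9p6:
  fixes \<beta> :: "int \<times> int" and i :: nat
  assumes "\<beta> \<in> pos_roots" and "i < 2"
  shows "\<exists>a1 a2 j (t::int). is_word a1 \<and> is_word a2 \<and> j < 2 \<and>
           (\<forall>(d::'a::ring_1) di r0 r1 e0 e1. brg2_rel d di r0 r1 e0 e1 \<longrightarrow>
              ebeta r0 r1 e0 e1 \<beta> * gen_e e0 e1 i =
              zpow d di t * wprod r0 r1 a1 * gen_e e0 e1 j * wprod r0 r1 a2)"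
proof -
  define P where "P = (\<lambda>(w, k). is_word w \<and> k < 2 \<and> wact w (simple_root k) = \<beta>)"
  have ex: "\<exists>x. P x"
    using assms(1) unfolding pos_roots_def
    apply (elim insertE emptyE)
         apply (rule exI[of _ "([], 0)"], simp add: P_def is_word_def wact_def refl_def simple_root_def)
        apply (rule exI[of _ "([], 1)"], simp add: P_def is_word_def wact_def refl_def simple_root_def)
       apply (rule exI[of _ "([1], 0)"], simp add: P_def is_word_def wact_def refl_def simple_root_def)
      apply (rule exI[of _ "([0,1], 0)"], simp add: P_def is_word_def wact_def refl_def simple_root_def)
     apply (rule exI[of _ "([0], 1)"], simp add: P_def is_word_def wact_def refl_def simple_root_def)
    apply (rule exI[of _ "([1,0], 1)"], simp add: P_def is_word_def wact_def refl_def simple_root_def)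
    done
  define x where "x = (SOME x. P x)"
  have Px: "P x" unfolding x_def using ex by (rule someI_ex)
  obtain w k where xwk: "x = (w, k)" by (cases x)
  have hw: "is_word w" "k < 2" "wact w (simple_root k) = \<beta>" using Px xwk by (auto simp: P_def)
  have eb: "\<And>(r0::'a) r1 e0 e1. ebeta r0 r1 e0 e1 \<beta> = wprod r0 r1 w * gen_e e0 e1 k * wprod r0 r1 (rev w)"
    using xwk unfolding ebeta_def x_def P_def by simp
  define u where "u = nfw w"
  have uN: "u \<in> set NFL" unfolding u_def by (rule nfw_NF)
  have uw: "is_word u" by (rule NF_word[OF uN])
  have "wact u (simple_root k) = \<beta>" using wact_nfw[OF hw(1)] hw(3) unfolding u_def by simp
  then have "Q TYPE('a) u k i" using Q_all[OF uN hw(2) assms(2)] assms(1) by simp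
  then obtain a1 a2 j and t :: nat where
    qa: "is_word a1" "is_word a2" "j < 2" and
    qb: "\<forall>(d::'a) di r0 r1 e0 e1. brg2_rel d di r0 r1 e0 e1 \<longrightarrow> ev r0 r1 e0 e1 (u @ [k+2] @ rev u @ [i+2]) = d ^ t * ev r0 r1 e0 e1 (a1 @ [j+2] @ a2)"
    unfolding Q_def by blast
  show ?thesis
  proof (intro exI conjI allI impI)
    show "is_word a1" "is_word a2" "j < 2" by fact+
    fix d di r0 r1 e0 e1 :: 'a
    assume H: "brg2_rel d di r0 r1 e0 e1"
    interpret brg d di r0 r1 e0 e1 by unfold_locales (rule H)
    have "ebeta r0 r1 e0 e1 \<beta> * gen_e e0 e1 i = E w * E [k+2] * E (rev w) * E [i+2]"
      using hw assms(2) by (simp add: eb wprod_E gen_e_E is_word_def)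
    also have "\<dots> = E u * E [k+2] * E (rev u) * E [i+2]"
      using E_nfw[OF hw(1)] E_rev_nfw[OF hw(1)] unfolding u_def by simp
    also have "\<dots> = E (u @ [k+2] @ rev u @ [i+2])" by (simp add: ev_append ev_Cons mult.assoc)
    also have "\<dots> = d ^ t * E (a1 @ [j+2] @ a2)" using qb H by blast
    also have "\<dots> = zpow d di (int t) * wprod r0 r1 a1 * gen_e e0 e1 j * wprod r0 r1 a2"
      using qa by (simp add: zpow_def wprod_E gen_e_E ev_append ev_Cons mult.assoc)
    finally show "ebeta r0 r1 e0 e1 \<beta> * gen_e e0 e1 i = zpow d di (int t) * wprod r0 r1 a1 * gen_e e0 e1 j * wprod r0 r1 a2" .
  qed
qed

end
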